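(* Let $(A_n)_{n\in\mathbb{N}}\subset\mathbb{N}$ satisfy $\lim_{n\to\infty}n^{-1}\log A_n=a$ for some $a>0$. Then for every $T>0$ and every sequence $(k_n)_{n\in\mathbb{N}}\subset\mathbb{N}_0$, $$\lim_{n\to\infty}\sup_{0\le t\le T}\Big|\frac1n\log^+\Big(\sum_{i=1}^{A_n}X_{i,k_n}([nt])\Big)-(a+t\log\mu)^+\Big|=0\quad\text{a.s.}$$
   Context: $(X_{i,k})_{i\in\mathbb{N},k\in\mathbb{N}_0}$ are i.i.d. Galton–Watson processes $X_{i,k}=(X_{i,k}(n))_{n\in\mathbb{N}_0}$ with $X_{i,k}(0)=1$ and offspring mean $\mu\in(0,\infty)$. $\log^+x=\max(\log x,0)$, $x^+=\max(x,0)$, $[\cdot]$ is the integer part. *)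

theory Defs
  imports "HOL-Probability.Probability"
begin

text \<open>Positive part of the natural logarithm: log^+ x = max (log x) 0
  (note ln 0 = 0 in Isabelle, so log^+ 0 = 0).\<close>
definition logplus :: "real \<Rightarrow> real" where
  "logplus x = max (ln x) 0"

end

theory Submission imports Defs begin

lemma det_lower_path:
  fixes Z :: "nat \<Rightarrow> nat" and n :: nat and Aa \<mu> r a T \<epsilon> t :: real
  assumes n: "n \<ge> 1" and eps: "\<epsilon> > 0" and mu: "\<mu> > 0" and t: "0 \<le> t" "t \<le> T"
    and r: "r = \<mu> * exp (-\<epsilon>)"
    and Aa: "Aa \<ge> 1" and Z0: "real (Z 0) = Aa"
    and hA: "ln Aa / n \<ge> a - \<epsilon>"
    and big: "a + t * ln \<mu> > (T+3) * \<epsilon>" and ha: "(T+3) * \<epsilon> \<le> a"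
    and mN: "m \<le> N" and mt: "real m \<le> n * t"
    and lo: "\<forall>m'<N. exp (\<epsilon> * n) \<le> real (Z m') \<longrightarrow> r * real (Z m') \<le> real (Z (Suc m'))"
  shows "\<forall>m'\<le>m. Aa * r ^ m' \<le> real (Z m')"
proof (intro allI impI)
  fix m' assume "m' \<le> m"
  then show "Aa * r ^ m' \<le> real (Z m')"
  proof (induction m')
    case 0
    then show ?case using Z0 by simp
  next
    case (Suc m')
    then have IH: "Aa * r ^ m' \<le> real (Z m')" by simp
    have rpos: "r > 0" using r mu by simp
    have lnr: "ln r = ln \<mu> - \<epsilon>" using r mu by (simp add: ln_mult)
    have m'm: "real m' \<le> real m" using Suc.prems by simp
    have "ln (Aa * r ^ m') = ln Aa + m' * ln r"
      using Aa rpos by (simp add: ln_mult ln_realpow)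
    also have "\<dots> = ln Aa + m' * ln \<mu> - m' * \<epsilon>" unfolding lnr by (simp add: right_diff_distrib)
    also have "\<dots> \<ge> n * (a - \<epsilon>) + min 0 (n * t * ln \<mu>) - n * T * \<epsilon>"
    proof -
      have "ln Aa \<ge> n * (a - \<epsilon>)" using hA n by (simp add: field_simps)
      moreover have "m' * ln \<mu> \<ge> min 0 (n * t * ln \<mu>)"
      proof (cases "ln \<mu> \<ge> 0")
        case True
        then have "0 \<le> real m' * ln \<mu>" by simp
        then show ?thesis by (simp add: min_le_iff_disj)
      next
        case False
        have "real m' \<le> n * t" using m'm mt by simp
        then have "m' * ln \<mu> \<ge> n * t * ln \<mu>" using False by (intro mult_right_mono_neg) auto
        then show ?thesis by simp
      qed
      moreover have "m' * \<epsilon> \<le> n * T * \<epsilon>"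
      proof -
        have "real n * t \<le> n * T" using t by (intro mult_left_mono) auto
        then have "real m' \<le> n * T" using m'm mt by linarith
        then show ?thesis using eps by (intro mult_right_mono) auto
      qed
      ultimately show ?thesis by linarith
    qed
    finally have lnge: "ln (Aa * r ^ m') \<ge> n * (a - \<epsilon>) + min 0 (n * t * ln \<mu>) - n * T * \<epsilon>" .
    have "n * (a - \<epsilon>) + min 0 (n * t * ln \<mu>) - n * T * \<epsilon> \<ge> \<epsilon> * n"
    proof -
      have "a + min 0 (t * ln \<mu>) \<ge> (T+3) * \<epsilon>" using big ha by (simp add: min_def)
      then have "n * (a + min 0 (t * ln \<mu>)) \<ge> n * ((T+3) * \<epsilon>)" by (intro mult_left_mono) auto
      moreover have "n * min 0 (t * ln \<mu>) = min 0 (n * t * ln \<mu>)"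
        using n by (simp add: min_def mult_le_0_iff zero_le_mult_iff mult.assoc)
      moreover have "0 \<le> \<epsilon> * real n" using eps by simp
      ultimately show ?thesis using eps n by (simp add: algebra_simps, linarith)
    qed
    with lnge have "ln (Aa * r ^ m') \<ge> \<epsilon> * n" by linarith
    then have "exp (\<epsilon> * n) \<le> Aa * r ^ m'"
      using Aa rpos by (metis exp_le_cancel_iff exp_ln mult_pos_pos order.strict_trans2 zero_less_one zero_less_power)
    then have ex: "exp (\<epsilon> * n) \<le> real (Z m')" using IH by linarith
    have "m' < N" using Suc.prems mN by simp
    with lo ex have "r * real (Z m') \<le> real (Z (Suc m'))" by blast
    moreover have "Aa * r ^ Suc m' \<le> r * real (Z m')" using IH rpos by (simp add: algebra_simps)
    ultimately show ?case by linarith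
  qed
qed

lemma det:
  fixes Z :: "nat \<Rightarrow> nat" and n N :: nat and Aa \<mu> a T \<epsilon> t :: real
  assumes n: "n \<ge> 1" and eps: "\<epsilon> > 0" and mu: "\<mu> > 0" and t: "0 \<le> t" "t \<le> T"
    and Aa: "Aa \<ge> 1" and Z0: "real (Z 0) = Aa"
    and hA: "\<bar>ln Aa / n - a\<bar> \<le> \<epsilon>" and hmu: "\<bar>ln \<mu>\<bar> / n \<le> \<epsilon>" and ha: "(T+3) * \<epsilon> \<le> a"
    and N: "N = nat \<lfloor>n * T\<rfloor>"
    and up: "\<forall>m\<le>N. real (Z m) < Aa * \<mu> ^ m * exp (\<epsilon> * n)"
    and lo: "\<forall>m<N. exp (\<epsilon> * n) \<le> real (Z m) \<longrightarrow> \<mu> * exp (-\<epsilon>) * real (Z m) \<le> real (Z (Suc m))"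
  shows "\<bar>logplus (real (Z (nat \<lfloor>n * t\<rfloor>))) / n - max (a + t * ln \<mu>) 0\<bar> \<le> (T+3) * \<epsilon>"
proof -
  define m where "m = nat \<lfloor>n * t\<rfloor>"
  define g where "g = max (a + t * ln \<mu>) 0"
  define L where "L = logplus (real (Z m))"
  have npos: "real n > 0" using n by simp
  have nt0: "0 \<le> n * t" using t by simp
  have mt: "real m \<le> n * t" unfolding m_def using nt0 by linarith
  have mt2: "n * t < real m + 1" unfolding m_def using nt0 by linarith
  have mN: "m \<le> N" unfolding m_def N
  proof (intro nat_mono floor_mono)
    show "n * t \<le> n * T" using t by (intro mult_left_mono) auto
  qed
  have lnmu_n: "\<bar>ln \<mu>\<bar> \<le> n * \<epsilon>" using hmu npos by (simp add: field_simps)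
  have mlnmu: "\<bar>real m * ln \<mu> - n * t * ln \<mu>\<bar> \<le> n * \<epsilon>"
  proof -
    have "\<bar>real m * ln \<mu> - n * t * ln \<mu>\<bar> = \<bar>real m - n * t\<bar> * \<bar>ln \<mu>\<bar>"
      by (simp add: left_diff_distrib[symmetric] abs_mult)
    also have "\<dots> \<le> 1 * \<bar>ln \<mu>\<bar>" using mt mt2 by (intro mult_right_mono) auto
    finally show ?thesis using lnmu_n by simp
  qed
  have lnA1: "ln Aa \<le> n * (a + \<epsilon>)" and lnA2: "ln Aa \<ge> n * (a - \<epsilon>)"
    using hA npos by (simp_all add: abs_le_iff field_simps)
  have T0: "T \<ge> 0" using t by simp
  have upper: "L \<le> n * (g + 3 * \<epsilon>)"
  proof (cases "Z m = 0")
    case True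
    have "0 \<le> n * (g + 3 * \<epsilon>)" using eps npos by (simp add: g_def)
    then show ?thesis using True by (simp add: L_def logplus_def)
  next
    case False
    then have Zp: "real (Z m) > 0" by simp
    have "ln (real (Z m)) < ln (Aa * \<mu> ^ m * exp (\<epsilon> * n))"
      using up mN Zp by (subst ln_less_cancel_iff) auto
    also have "\<dots> = ln Aa + m * ln \<mu> + \<epsilon> * n"
      using Aa mu by (simp add: ln_mult ln_realpow)
    also have "\<dots> \<le> n * (a + \<epsilon>) + (n * t * ln \<mu> + n * \<epsilon>) + \<epsilon> * n"
      using lnA1 mlnmu mult.commute[of \<epsilon> "real n"] unfolding abs_le_iff by linarith
    also have "\<dots> = n * (a + t * ln \<mu> + 3 * \<epsilon>)" by (simp add: algebra_simps)
    also have "\<dots> \<le> n * (g + 3 * \<epsilon>)" by (intro mult_left_mono) (auto simp: g_def)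
    finally have "ln (real (Z m)) \<le> n * (g + 3 * \<epsilon>)" by simp
    moreover have "0 \<le> n * (g + 3 * \<epsilon>)" using eps npos by (simp add: g_def)
    ultimately show ?thesis by (simp add: L_def logplus_def)
  qed
  have lower: "L \<ge> n * (g - (T+3) * \<epsilon>)"
  proof (cases "a + t * ln \<mu> > (T+3) * \<epsilon>")
    case False
    then have "g \<le> (T+3) * \<epsilon>" using eps T0 by (simp add: g_def)
    then have "n * (g - (T+3) * \<epsilon>) \<le> 0" using npos by (simp add: mult_le_0_iff)
    moreover have "0 \<le> L" by (simp add: L_def logplus_def)
    ultimately show ?thesis by linarith
  next
    case True
    define r where "r = \<mu> * exp (-\<epsilon>)"
    have rpos: "r > 0" using mu by (simp add: r_def)
    have "\<forall>m'\<le>m. Aa * r ^ m' \<le> real (Z m')"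
    proof (rule det_lower_path[where Z=Z and n=n and \<epsilon>=\<epsilon> and \<mu>=\<mu> and t=t and T=T and r=r and Aa=Aa and a=a and m=m and N=N])
      show "a - \<epsilon> \<le> ln Aa / real n" using lnA2 npos by (simp add: field_simps)
      show "\<forall>m'<N. exp (\<epsilon> * real n) \<le> real (Z m') \<longrightarrow> r * real (Z m') \<le> real (Z (Suc m'))"
        using lo by (simp add: r_def)
    qed (use n eps mu t Aa Z0 True ha mN mt r_def in auto)
    then have Zge: "Aa * r ^ m \<le> real (Z m)" by simp
    have Ar: "Aa * r ^ m > 0" using Aa rpos by simp
    have "n * (g - (T+3) * \<epsilon>) \<le> n * (a + t * ln \<mu> - (T+2) * \<epsilon>)"
    proof -
      have "g = a + t * ln \<mu>" using True eps T0 unfolding g_def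
        by (metis max.absorb1 less_eq_real_def order.strict_trans2 zero_le_mult_iff add_nonneg_nonneg zero_le_numeral
          less_imp_le)
      then show ?thesis using eps npos by (intro mult_left_mono) auto
    qed
    also have "\<dots> = n * (a - \<epsilon>) + (n * t * ln \<mu> - n * \<epsilon>) - n * T * \<epsilon>" by (simp add: algebra_simps)
    also have "\<dots> \<le> ln Aa + m * ln \<mu> - m * \<epsilon>"
    proof -
      have "real m * \<epsilon> \<le> n * T * \<epsilon>"
      proof -
        have "real n * t \<le> n * T" using t by (intro mult_left_mono) auto
        then have "real m \<le> n * T" using mt by linarith
        then show ?thesis using eps by (intro mult_right_mono) auto
      qed
      then show ?thesis using lnA2 mlnmu by (simp add: abs_le_iff)
    qed
    also have "\<dots> = ln (Aa * r ^ m)"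
      using Aa rpos mu by (simp add: ln_mult ln_realpow r_def algebra_simps)
    also have "\<dots> \<le> ln (real (Z m))" using Zge Ar by (subst ln_le_cancel_iff) auto
    also have "\<dots> \<le> L" by (simp add: L_def logplus_def)
    finally show ?thesis .
  qed
  have "\<bar>L / n - g\<bar> \<le> (T+3) * \<epsilon>"
  proof -
    have "L / n \<le> g + 3 * \<epsilon>" using upper npos by (simp add: field_simps)
    moreover have "L / n \<ge> g - (T+3) * \<epsilon>" using lower npos by (simp add: field_simps)
    moreover have "3 * \<epsilon> \<le> (T+3) * \<epsilon>" using T0 eps by (simp add: field_simps)
    ultimately show ?thesis by (simp add: abs_le_iff)
  qed
  then show ?thesis by (simp add: L_def g_def m_def)
qed

lemma summ:
  fixes \<epsilon> T c :: real
  assumes eps: "\<epsilon> > 0" and T: "T \<ge> 0"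
  shows "summable (\<lambda>n::nat. (real n * T + 1) * exp (- \<epsilon> * n))"
proof (rule summable_comparison_test)
  have g: "summable (\<lambda>n. exp (- \<epsilon> / 2) ^ n)"
    using eps by (intro summable_geometric) simp
  show "summable (\<lambda>n. (2 * T / \<epsilon> + 1) * exp (- \<epsilon> / 2) ^ n)"
    by (rule summable_mult[OF g])
  show "\<exists>N. \<forall>n\<ge>N. norm ((real n * T + 1) * exp (- \<epsilon> * n)) \<le> (2 * T / \<epsilon> + 1) * exp (- \<epsilon> / 2) ^ n"
  proof (intro exI allI impI)
    fix n :: nat
    have e: "exp (- \<epsilon> / 2) ^ n = exp (- \<epsilon> * n / 2)" by (simp add: exp_of_nat_mult[symmetric] ac_simps)
    have sp: "exp (- \<epsilon> * n) = exp (- \<epsilon> * n / 2) * exp (- \<epsilon> * n / 2)" by (simp add: exp_add[symmetric])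
    have "\<epsilon> * n / 2 \<le> exp (\<epsilon> * n / 2)" using exp_ge_add_one_self[of "\<epsilon> * n / 2"] by linarith
    moreover have "\<epsilon> * n / 2 * exp (- \<epsilon> * n / 2) = (\<epsilon> * n / 2) / exp (\<epsilon> * n / 2)"
      by (simp add: exp_minus field_simps)
    ultimately have "\<epsilon> * n / 2 * exp (- \<epsilon> * n / 2) \<le> 1"
      by (simp add: divide_le_eq_1)
    then have n1: "real n * exp (- \<epsilon> * n / 2) \<le> 2 / \<epsilon>" using eps by (simp add: field_simps)
    have n2: "exp (- \<epsilon> * n / 2) \<le> 1" using eps by simp
    have "(real n * T + 1) * exp (- \<epsilon> * n) = (T * (real n * exp (- \<epsilon> * n / 2)) + exp (- \<epsilon> * n / 2)) * exp (- \<epsilon> * n / 2)"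
      by (subst sp) (simp add: algebra_simps)
    also have "\<dots> \<le> (T * (2 / \<epsilon>) + 1) * exp (- \<epsilon> * n / 2)"
      using n1 n2 T by (intro mult_right_mono add_mono mult_left_mono) auto
    finally have fin: "(real n * T + 1) * exp (- \<epsilon> * n) \<le> (T * (2 / \<epsilon>) + 1) * exp (- \<epsilon> * n / 2)" .
    have eq2: "(2 * T / \<epsilon> + 1) * exp (- \<epsilon> / 2) ^ n = (T * (2 / \<epsilon>) + 1) * exp (- \<epsilon> * n / 2)"
      by (simp only: e) simp
    have nn: "norm ((real n * T + 1) * exp (- \<epsilon> * n)) = (real n * T + 1) * exp (- \<epsilon> * n)" using T by simp
    show "norm ((real n * T + 1) * exp (- \<epsilon> * n)) \<le> (2 * T / \<epsilon> + 1) * exp (- \<epsilon> / 2) ^ n"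
      unfolding nn eq2 by (rule fin)
  qed
qed


locale gw = prob_space M for M :: "'w measure" +
  fixes p :: "nat pmf" and \<mu> :: real
    and \<xi> :: "nat \<Rightarrow> nat \<Rightarrow> nat \<Rightarrow> nat \<Rightarrow> 'w \<Rightarrow> nat"
    and X :: "nat \<Rightarrow> nat \<Rightarrow> nat \<Rightarrow> 'w \<Rightarrow> nat"
  assumes int_p: "integrable (measure_pmf p) real"
    and mu_def: "measure_pmf.expectation p real = \<mu>" and mu_pos: "0 < \<mu>"
    and indep: "indep_vars (\<lambda>_. count_space UNIV) (\<lambda>(i, k, n, j). \<xi> i k n j) UNIV"
    and distr: "\<And>i k n j. distr M (count_space UNIV) (\<xi> i k n j) = measure_pmf p"
    and X0: "\<And>i k \<omega>. X i k 0 \<omega> = 1"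
    and XSuc: "\<And>i k n \<omega>. X i k (Suc n) \<omega> = (\<Sum>j<X i k n \<omega>. \<xi> i k n j \<omega>)"
begin

definition xi' :: "nat \<times> nat \<times> nat \<times> nat \<Rightarrow> 'w \<Rightarrow> nat" where
  "xi' = (\<lambda>(i, k, n, j). \<xi> i k n j)"

definition lvl :: "nat \<times> nat \<times> nat \<times> nat \<Rightarrow> nat" where
  "lvl = (\<lambda>(i, k, n, j). n)"

definition Gen :: "nat set \<Rightarrow> 'w set set" where
  "Gen L = sigma_sets (space M) (\<Union>\<iota>\<in>{\<iota>. lvl \<iota> \<in> L}. {xi' \<iota> -` A \<inter> space M | A. A \<in> sets (count_space UNIV)})"

definition GM :: "nat set \<Rightarrow> 'w measure" where
  "GM L = sigma (space M) (\<Union>\<iota>\<in>{\<iota>. lvl \<iota> \<in> L}. {xi' \<iota> -` A \<inter> space M | A. A \<in> sets (count_space UNIV)})"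

lemma sets_GM: "sets (GM L) = Gen L"
  unfolding GM_def Gen_def by (rule sets_measure_of) auto

lemma space_GM: "space (GM L) = space M"
  unfolding GM_def by (rule space_measure_of) auto

lemma rv_xi[measurable]: "\<xi> i k n j \<in> measurable M (count_space UNIV)"
  using indep unfolding indep_vars_def by (auto dest: bspec[of _ _ "(i,k,n,j)"])

lemma Gen_sub: "Gen L \<subseteq> sets M"
  unfolding Gen_def
  by (rule sets.sigma_sets_subset) (auto simp: xi'_def split: prod.splits)

lemma indep_levels:
  assumes "L1 \<inter> L2 = {}" "E \<in> Gen L1" "B \<in> Gen L2"
  shows "prob (E \<inter> B) = prob E * prob B"
proof -
  let ?E = "\<lambda>\<iota>. {xi' \<iota> -` A \<inter> space M | A. A \<in> sets (count_space UNIV)}"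
  let ?I = "\<lambda>b. if b then {\<iota>. lvl \<iota> \<in> L1} else {\<iota>. lvl \<iota> \<in> L2}"
  have ind: "indep_sets ?E UNIV"
    using indep unfolding indep_vars_def2 xi'_def by simp
  have "indep_sets (\<lambda>b. sigma_sets (space M) (\<Union>\<iota>\<in>?I b. ?E \<iota>)) UNIV"
  proof (rule indep_sets_collect_sigma)
    show "indep_sets ?E (\<Union>b\<in>UNIV. ?I b)" using indep_sets_mono_index[OF _ ind] by auto
    show "Int_stable (?E \<iota>)" for \<iota>
      unfolding Int_stable_def
      by clarify (rule_tac x="A \<inter> Aa" in exI, auto)
    show "disjoint_family_on ?I UNIV"
      using assms(1) unfolding disjoint_family_on_def by auto
  qed
  moreover have "case_bool (Gen L1) (Gen L2) = (\<lambda>b. sigma_sets (space M) (\<Union>\<iota>\<in>?I b. ?E \<iota>))"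
    by (rule ext) (auto simp: Gen_def split: bool.split)
  ultimately have "indep_set (Gen L1) (Gen L2)"
    unfolding indep_set_def by simp
  then show ?thesis using indep_setD assms by blast
qed

lemma meas_add_nat:
  fixes f g :: "'a \<Rightarrow> nat"
  assumes f: "f \<in> measurable N (count_space UNIV)" and g: "g \<in> measurable N (count_space UNIV)"
  shows "(\<lambda>x. f x + g x) \<in> measurable N (count_space UNIV)"
proof -
  have "(\<lambda>x. (\<lambda>a x. a + g x) (f x) x) \<in> measurable N (count_space UNIV)"
  proof (rule measurable_compose_countable[OF _ f])
    fix a :: nat
    show "(\<lambda>x. a + g x) \<in> measurable N (count_space UNIV)"
      by (rule measurable_compose_countable[where f="\<lambda>b x. a + b", OF _ g]) simp
  qed
  then show ?thesis by simp
qed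

lemma meas_sum_nat:
  fixes f :: "nat \<Rightarrow> 'a \<Rightarrow> nat"
  assumes f: "\<And>j. j \<in> S \<Longrightarrow> f j \<in> measurable N (count_space UNIV)"
  shows "(\<lambda>x. \<Sum>j\<in>S. f j x) \<in> measurable N (count_space UNIV)"
  using f
proof (induction S rule: infinite_finite_induct)
  case (insert a F)
  then show ?case by (simp add: meas_add_nat)
qed simp_all

lemma xi_GM: "l \<in> L \<Longrightarrow> \<xi> i k l j \<in> measurable (GM L) (count_space UNIV)"
proof (rule measurableI)
  fix A :: "nat set" assume "l \<in> L"
  have "xi' (i,k,l,j) -` A \<inter> space M \<in> Gen L"
    unfolding Gen_def
  proof (rule sigma_sets.Basic)
    show "xi' (i,k,l,j) -` A \<inter> space M \<in> (\<Union>\<iota>\<in>{\<iota>. lvl \<iota> \<in> L}. {xi' \<iota> -` A \<inter> space M | A. A \<in> sets (count_space UNIV)})"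
    proof (rule UN_I)
      show "(i,k,l,j) \<in> {\<iota>. lvl \<iota> \<in> L}" using \<open>l \<in> L\<close> by (simp add: lvl_def)
      show "xi' (i,k,l,j) -` A \<inter> space M \<in> {xi' (i,k,l,j) -` A \<inter> space M | A. A \<in> sets (count_space UNIV)}"
        by auto
    qed
  qed
  then show "\<xi> i k l j -` A \<inter> space (GM L) \<in> sets (GM L)"
    by (simp add: sets_GM space_GM xi'_def)
qed auto

lemma X_GM: "(\<And>l. l < m \<Longrightarrow> l \<in> L) \<Longrightarrow> X i k m \<in> measurable (GM L) (count_space UNIV)"
proof (induction m)
  case 0
  then show ?case by (simp add: X0)
next
  case (Suc m)
  have "(\<lambda>\<omega>. (\<lambda>N \<omega>. \<Sum>j<N. \<xi> i k m j \<omega>) (X i k m \<omega>) \<omega>) \<in> measurable (GM L) (count_space UNIV)"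
    by (rule measurable_compose_countable[OF meas_sum_nat[OF xi_GM]]) (use Suc in auto)
  then show ?case by (simp add: XSuc[abs_def])
qed

lemma subalg_GM: "subalgebra M (GM L)"
  unfolding subalgebra_def using Gen_sub by (simp add: sets_GM space_GM)

lemma X_meas[measurable]: "X i k m \<in> measurable M (count_space UNIV)"
  using measurable_from_subalg[OF subalg_GM X_GM[of m UNIV]] by simp

lemma X_Gen: "(\<And>l. l < m \<Longrightarrow> l \<in> L) \<Longrightarrow> {\<omega>\<in>space M. X i k m \<omega> = N} \<in> Gen L"
proof -
  assume "(\<And>l. l < m \<Longrightarrow> l \<in> L)"
  then have "X i k m -` {N} \<inter> space (GM L) \<in> sets (GM L)"
    by (intro measurable_sets[OF X_GM]) auto
  then show ?thesis by (simp add: sets_GM space_GM vimage_def Int_def conj_commute)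
qed

lemma nn_nat:
  fixes g :: "'w \<Rightarrow> nat"
  assumes g: "g \<in> measurable M (count_space UNIV)" and E: "E \<in> sets M"
  shows "(\<integral>\<^sup>+\<omega>. indicator E \<omega> * of_nat (g \<omega>) \<partial>M) = (\<Sum>x. of_nat x * emeasure M (E \<inter> {\<omega>\<in>space M. g \<omega> = x}))"
proof -
  have meas: "{\<omega>\<in>space M. g \<omega> = x} \<in> sets M" for x
    using measurable_sets[OF g, of "{x}"] by (simp add: vimage_def Int_def conj_commute)
  have eq: "indicator E \<omega> * of_nat (g \<omega>) = (\<Sum>x. of_nat x * indicator (E \<inter> {\<omega>\<in>space M. g \<omega> = x}) \<omega> :: ennreal)"
    if "\<omega> \<in> space M" for \<omega>
  proof -
    have "(\<lambda>x. of_nat x * indicator (E \<inter> {\<omega>\<in>space M. g \<omega> = x}) \<omega> :: ennreal)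
       = (\<lambda>x. if x = g \<omega> then indicator E \<omega> * of_nat (g \<omega>) else 0)"
      using that by (auto simp: indicator_def)
    then show ?thesis using sums_single[of "g \<omega>" "\<lambda>_. indicator E \<omega> * of_nat (g \<omega>) :: ennreal"]
      by (simp add: sums_iff)
  qed
  have "(\<integral>\<^sup>+\<omega>. indicator E \<omega> * of_nat (g \<omega>) \<partial>M)
      = (\<integral>\<^sup>+\<omega>. (\<Sum>x. of_nat x * indicator (E \<inter> {\<omega>\<in>space M. g \<omega> = x}) \<omega>) \<partial>M)"
    by (rule nn_integral_cong) (simp add: eq)
  also have "\<dots> = (\<Sum>x. \<integral>\<^sup>+\<omega>. of_nat x * indicator (E \<inter> {\<omega>\<in>space M. g \<omega> = x}) \<omega> \<partial>M)"
    by (rule nn_integral_suminf) (use meas E in auto)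
  also have "\<dots> = (\<Sum>x. of_nat x * emeasure M (E \<inter> {\<omega>\<in>space M. g \<omega> = x}))"
    by (intro suminf_cong nn_integral_cmult_indicator) (use meas E in auto)
  finally show ?thesis .
qed

lemma indep_nn:
  fixes f :: "'w \<Rightarrow> nat"
  assumes L: "L1 \<inter> L2 = {}" and E: "E \<in> Gen L1" and f: "f \<in> measurable (GM L2) (count_space UNIV)"
  shows "(\<integral>\<^sup>+\<omega>. indicator E \<omega> * of_nat (f \<omega>) \<partial>M) = emeasure M E * (\<integral>\<^sup>+\<omega>. of_nat (f \<omega>) \<partial>M)"
proof -
  have fM: "f \<in> measurable M (count_space UNIV)"
    using measurable_from_subalg[OF subalg_GM f] .
  have EM: "E \<in> sets M" using E Gen_sub by auto
  have fG: "{\<omega>\<in>space M. f \<omega> = x} \<in> Gen L2" for x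
    using measurable_sets[OF f, of "{x}"] by (simp add: sets_GM space_GM vimage_def Int_def conj_commute)
  have "(\<integral>\<^sup>+\<omega>. indicator E \<omega> * of_nat (f \<omega>) \<partial>M) = (\<Sum>x. of_nat x * emeasure M (E \<inter> {\<omega>\<in>space M. f \<omega> = x}))"
    by (rule nn_nat[OF fM EM])
  also have "\<dots> = (\<Sum>x. emeasure M E * (of_nat x * emeasure M {\<omega>\<in>space M. f \<omega> = x}))"
  proof (rule suminf_cong)
    fix x
    have "prob (E \<inter> {\<omega>\<in>space M. f \<omega> = x}) = prob E * prob {\<omega>\<in>space M. f \<omega> = x}"
      by (rule indep_levels[OF L E fG])
    then have "emeasure M (E \<inter> {\<omega>\<in>space M. f \<omega> = x}) = emeasure M E * emeasure M {\<omega>\<in>space M. f \<omega> = x}"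
      by (simp add: emeasure_eq_measure ennreal_mult)
    then show "of_nat x * emeasure M (E \<inter> {\<omega>\<in>space M. f \<omega> = x}) = emeasure M E * (of_nat x * emeasure M {\<omega>\<in>space M. f \<omega> = x})"
      by (simp add: ac_simps)
  qed
  also have "\<dots> = emeasure M E * (\<Sum>x. of_nat x * emeasure M (space M \<inter> {\<omega>\<in>space M. f \<omega> = x}))"
    by (simp add: ennreal_suminf_cmult Int_absorb1)
  also have "(\<Sum>x. of_nat x * emeasure M (space M \<inter> {\<omega>\<in>space M. f \<omega> = x})) = (\<integral>\<^sup>+\<omega>. indicator (space M) \<omega> * of_nat (f \<omega>) \<partial>M)"
    by (rule nn_nat[OF fM, symmetric]) simp
  also have "\<dots> = (\<integral>\<^sup>+\<omega>. of_nat (f \<omega>) \<partial>M)"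
    by (rule nn_integral_cong) simp
  finally show ?thesis .
qed

lemma nn_xi: "(\<integral>\<^sup>+\<omega>. of_nat (\<xi> i k m j \<omega>) \<partial>M) = ennreal \<mu>"
proof -
  have "(\<integral>\<^sup>+\<omega>. of_nat (\<xi> i k m j \<omega>) \<partial>M) = (\<integral>\<^sup>+x. of_nat x \<partial>distr M (count_space UNIV) (\<xi> i k m j))"
    by (rule nn_integral_distr[symmetric]) auto
  also have "\<dots> = (\<integral>\<^sup>+x. ennreal (real x) \<partial>measure_pmf p)"
    by (simp add: distr ennreal_of_nat_eq_real_of_nat)
  also have "\<dots> = ennreal (measure_pmf.expectation p real)"
    by (rule nn_integral_eq_integral[OF int_p]) auto
  finally show ?thesis by (simp add: mu_def)
qed

lemma nn_sum_xi: "(\<integral>\<^sup>+\<omega>. of_nat (\<Sum>j<N. \<xi> i k m j \<omega>) \<partial>M) = of_nat N * ennreal \<mu>"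
proof -
  have "(\<integral>\<^sup>+\<omega>. of_nat (\<Sum>j<N. \<xi> i k m j \<omega>) \<partial>M) = (\<integral>\<^sup>+\<omega>. (\<Sum>j<N. of_nat (\<xi> i k m j \<omega>)) \<partial>M)"
    by simp
  also have "\<dots> = (\<Sum>j<N. \<integral>\<^sup>+\<omega>. of_nat (\<xi> i k m j \<omega>) \<partial>M)"
    by (rule nn_integral_sum) auto
  finally show ?thesis by (simp add: nn_xi)
qed

lemma nn_X: "(\<integral>\<^sup>+\<omega>. of_nat (X i k m \<omega>) \<partial>M) = ennreal (\<mu> ^ m)"
proof (induction m)
  case 0
  then show ?case by (simp add: X0 emeasure_space_1)
next
  case (Suc m)
  let ?E = "\<lambda>N. {\<omega>\<in>space M. X i k m \<omega> = N}"
  have EG: "?E N \<in> Gen {..<m}" for N by (rule X_Gen) auto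
  have EM: "?E N \<in> sets M" for N using EG Gen_sub by auto
  have eq: "of_nat (X i k (Suc m) \<omega>) = (\<Sum>N. indicator (?E N) \<omega> * of_nat (\<Sum>j<N. \<xi> i k m j \<omega>) :: ennreal)"
    if "\<omega> \<in> space M" for \<omega>
  proof -
    have "(\<lambda>N. indicator (?E N) \<omega> * of_nat (\<Sum>j<N. \<xi> i k m j \<omega>) :: ennreal)
       = (\<lambda>N. if N = X i k m \<omega> then of_nat (X i k (Suc m) \<omega>) else 0)"
      using that by (auto simp: indicator_def XSuc)
    then show ?thesis using sums_single[of "X i k m \<omega>" "\<lambda>_. of_nat (X i k (Suc m) \<omega>) :: ennreal"]
      by (simp add: sums_iff)
  qed
  have "(\<integral>\<^sup>+\<omega>. of_nat (X i k (Suc m) \<omega>) \<partial>M)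
      = (\<integral>\<^sup>+\<omega>. (\<Sum>N. indicator (?E N) \<omega> * of_nat (\<Sum>j<N. \<xi> i k m j \<omega>)) \<partial>M)"
    by (rule nn_integral_cong) (simp add: eq)
  also have "\<dots> = (\<Sum>N. \<integral>\<^sup>+\<omega>. indicator (?E N) \<omega> * of_nat (\<Sum>j<N. \<xi> i k m j \<omega>) \<partial>M)"
    by (rule nn_integral_suminf) (use EM in auto)
  also have "\<dots> = (\<Sum>N. emeasure M (?E N) * (of_nat N * ennreal \<mu>))"
  proof (rule suminf_cong)
    fix N
    have "(\<integral>\<^sup>+\<omega>. indicator (?E N) \<omega> * of_nat (\<Sum>j<N. \<xi> i k m j \<omega>) \<partial>M)
       = emeasure M (?E N) * (\<integral>\<^sup>+\<omega>. of_nat (\<Sum>j<N. \<xi> i k m j \<omega>) \<partial>M)"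
    proof -
      have fm: "(\<lambda>\<omega>. \<Sum>j<N. \<xi> i k m j \<omega>) \<in> measurable (GM {m}) (count_space UNIV)"
        by (rule meas_sum_nat) (rule xi_GM, simp)
      have "{..<m} \<inter> {m} = {}" by auto
      from indep_nn[OF this EG fm] show ?thesis .
    qed
    then show "(\<integral>\<^sup>+\<omega>. indicator (?E N) \<omega> * of_nat (\<Sum>j<N. \<xi> i k m j \<omega>) \<partial>M) = emeasure M (?E N) * (of_nat N * ennreal \<mu>)"
      by (simp only: nn_sum_xi)
  qed
  also have "\<dots> = (\<Sum>N. ennreal \<mu> * (of_nat N * emeasure M (space M \<inter> ?E N)))"
    by (intro suminf_cong) (simp add: Int_absorb1 ac_simps)
  also have "\<dots> = ennreal \<mu> * (\<Sum>N. of_nat N * emeasure M (space M \<inter> ?E N))"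
    by (rule ennreal_suminf_cmult)
  also have "(\<Sum>N. of_nat N * emeasure M (space M \<inter> ?E N)) = (\<integral>\<^sup>+\<omega>. indicator (space M) \<omega> * of_nat (X i k m \<omega>) \<partial>M)"
    by (rule nn_nat[symmetric]) auto
  also have "\<dots> = (\<integral>\<^sup>+\<omega>. of_nat (X i k m \<omega>) \<partial>M)"
    by (rule nn_integral_cong) simp
  finally show ?case using Suc mu_pos by (simp add: ennreal_mult[symmetric] ac_simps)
qed

lemma markov_Z:
  assumes S: "finite S" and c: "c > 0"
  shows "prob {\<omega>\<in>space M. c \<le> real (\<Sum>i\<in>S. X i k m \<omega>)} \<le> real (card S) * \<mu> ^ m / c"
proof -
  have int: "(\<integral>\<^sup>+\<omega>. of_nat (\<Sum>i\<in>S. X i k m \<omega>) \<partial>M) = ennreal (real (card S) * \<mu> ^ m)"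
  proof -
    have "(\<integral>\<^sup>+\<omega>. of_nat (\<Sum>i\<in>S. X i k m \<omega>) \<partial>M) = (\<integral>\<^sup>+\<omega>. (\<Sum>i\<in>S. of_nat (X i k m \<omega>)) \<partial>M)"
      by simp
    also have "\<dots> = (\<Sum>i\<in>S. \<integral>\<^sup>+\<omega>. of_nat (X i k m \<omega>) \<partial>M)"
      by (rule nn_integral_sum) auto
    also have "\<dots> = of_nat (card S) * ennreal (\<mu> ^ m)" by (simp only: nn_X) simp
    finally show ?thesis using mu_pos by (simp add: ennreal_mult ennreal_of_nat_eq_real_of_nat)
  qed
  have "{\<omega>\<in>space M. c \<le> real (\<Sum>i\<in>S. X i k m \<omega>)} = {\<omega>\<in>space M. 1 \<le> ennreal (1/c) * of_nat (\<Sum>i\<in>S. X i k m \<omega>)}"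
  proof -
    have "c \<le> real n \<longleftrightarrow> 1 \<le> ennreal (1/c) * of_nat n" for n :: nat
    proof -
      have "ennreal (1/c) * of_nat n = ennreal (real n / c)"
        using c by (simp add: ennreal_of_nat_eq_real_of_nat ennreal_mult[symmetric])
      then show ?thesis using c by (simp add: ennreal_le_iff2 field_simps)
    qed
    then show ?thesis by blast
  qed
  also have "emeasure M \<dots> \<le> ennreal (1/c) * (\<integral>\<^sup>+\<omega>. of_nat (\<Sum>i\<in>S. X i k m \<omega>) * indicator (space M) \<omega> \<partial>M)"
    using nn_integral_Markov_inequality[of "\<lambda>\<omega>. of_nat (\<Sum>i\<in>S. X i k m \<omega>)" "space M" M "ennreal (1/c)"]
    by simp
  also have "(\<integral>\<^sup>+\<omega>. of_nat (\<Sum>i\<in>S. X i k m \<omega>) * indicator (space M) \<omega> \<partial>M) = ennreal (real (card S) * \<mu> ^ m)"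
    by (subst int[symmetric]) (rule nn_integral_cong, simp)
  finally have "emeasure M {\<omega>\<in>space M. c \<le> real (\<Sum>i\<in>S. X i k m \<omega>)} \<le> ennreal (real (card S) * \<mu> ^ m / c)"
    using c mu_pos by (simp add: ennreal_mult[symmetric] field_simps)
  then show ?thesis
    using mu_pos c by (simp add: emeasure_eq_measure ennreal_le_iff)
qed

definition muK :: "nat \<Rightarrow> real" where
  "muK K = measure_pmf.expectation p (\<lambda>x. real (min x K))"

lemma xi'_meas[measurable]: "xi' \<iota> \<in> measurable M (count_space UNIV)"
  by (cases \<iota>) (simp add: xi'_def)

lemma hoeff:
  assumes I: "finite I" "I \<noteq> {}" and K: "K > 0" and r: "r \<le> muK K"
  shows "prob {\<omega>\<in>space M. real (\<Sum>\<iota>\<in>I. xi' \<iota> \<omega>) < r * card I}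
           \<le> exp (- 2 * (real (card I) * (muK K - r))\<^sup>2 / (real (card I) * (real K - 0)\<^sup>2))"
proof -
  define g :: "nat \<Rightarrow> real" where "g x = real (min x K)" for x
  have gm: "g \<in> measurable (count_space UNIV) borel" by simp
  have dg: "distr M borel (\<lambda>\<omega>. g (xi' \<iota> \<omega>)) = distr (measure_pmf p) borel g" for \<iota>
  proof -
    have "distr M borel (\<lambda>\<omega>. g (xi' \<iota> \<omega>)) = distr (distr M (count_space UNIV) (xi' \<iota>)) borel g"
      by (subst distr_distr) (auto simp: o_def)
    also have "distr M (count_space UNIV) (xi' \<iota>) = measure_pmf p"
      by (cases \<iota>) (simp add: xi'_def distr)
    finally show ?thesis .
  qed
  have EY: "expectation (\<lambda>\<omega>. g (xi' (0,0,0,0) \<omega>)) = muK K"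
  proof -
    have "expectation (\<lambda>\<omega>. g (xi' (0,0,0,0) \<omega>)) = integral\<^sup>L (distr M borel (\<lambda>\<omega>. g (xi' (0,0,0,0) \<omega>))) (\<lambda>x. x)"
      by (rule integral_distr[symmetric]) auto
    also have "\<dots> = integral\<^sup>L (distr (measure_pmf p) borel g) (\<lambda>x. x)" by (simp only: dg)
    also have "\<dots> = muK K" unfolding muK_def g_def by (subst integral_distr) auto
    finally show ?thesis .
  qed
  interpret H: Hoeffding_ineq_iid M I "\<lambda>\<iota> \<omega>. g (xi' \<iota> \<omega>)" "\<lambda>\<omega>. g (xi' (0,0,0,0) \<omega>)" 0 "real K"
       "expectation (\<lambda>\<omega>. g (xi' (0,0,0,0) \<omega>))"
  proof unfold_locales
    show "finite I" by (rule I)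
    have "indep_vars (\<lambda>_. count_space UNIV) xi' I"
      using indep_vars_subset[OF indep[folded xi'_def]] by simp
    then show "indep_vars (\<lambda>_. borel) (\<lambda>\<iota> \<omega>. g (xi' \<iota> \<omega>)) I"
      by (rule indep_vars_compose2) simp
    show "distr M borel (\<lambda>\<omega>. g (xi' \<iota> \<omega>)) = distr M borel (\<lambda>\<omega>. g (xi' (0,0,0,0) \<omega>))" for \<iota>
      by (simp only: dg)
    show "random_variable borel (\<lambda>\<omega>. g (xi' (0,0,0,0) \<omega>))" by simp
    show "AE x in M. g (xi' (0, 0, 0, 0) x) \<in> {0..real K}" by (simp add: g_def)
  qed
  have eps: "0 \<le> real (card I) * (muK K - r)" using r by simp
  have "{\<omega>\<in>space M. real (\<Sum>\<iota>\<in>I. xi' \<iota> \<omega>) < r * card I}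
      \<subseteq> {\<omega>\<in>space M. (\<Sum>\<iota>\<in>I. g (xi' \<iota> \<omega>)) \<le> real (card I) * expectation (\<lambda>\<omega>. g (xi' (0,0,0,0) \<omega>)) - real (card I) * (muK K - r)}"
  proof safe
    fix \<omega> assume "\<omega> \<in> space M" "real (\<Sum>\<iota>\<in>I. xi' \<iota> \<omega>) < r * card I"
    moreover have "(\<Sum>\<iota>\<in>I. g (xi' \<iota> \<omega>)) \<le> real (\<Sum>\<iota>\<in>I. xi' \<iota> \<omega>)"
      unfolding of_nat_sum by (rule sum_mono) (simp add: g_def)
    ultimately show "(\<Sum>\<iota>\<in>I. g (xi' \<iota> \<omega>)) \<le> real (card I) * expectation (\<lambda>\<omega>. g (xi' (0,0,0,0) \<omega>)) - real (card I) * (muK K - r)"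
      by (simp add: EY algebra_simps)
  qed
  then have "prob {\<omega>\<in>space M. real (\<Sum>\<iota>\<in>I. xi' \<iota> \<omega>) < r * card I}
      \<le> prob {\<omega>\<in>space M. (\<Sum>\<iota>\<in>I. g (xi' \<iota> \<omega>)) \<le> real (card I) * expectation (\<lambda>\<omega>. g (xi' (0,0,0,0) \<omega>)) - real (card I) * (muK K - r)}"
    by (intro finite_measure_mono) auto
  also have "\<dots> \<le> exp (- 2 * (real (card I) * (muK K - r))\<^sup>2 / (real (card I) * (real K - 0)\<^sup>2))"
    by (rule H.Hoeffding_ineq_le[OF eps]) (use K I in auto)
  finally show ?thesis .
qed

lemma meas_sum_nat':
  fixes f :: "'b \<Rightarrow> 'a \<Rightarrow> nat"
  assumes f: "\<And>j. j \<in> S \<Longrightarrow> f j \<in> measurable N (count_space UNIV)"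
  shows "(\<lambda>x. \<Sum>j\<in>S. f j x) \<in> measurable N (count_space UNIV)"
  using f
proof (induction S rule: infinite_finite_induct)
  case (insert a F)
  then show ?case by (simp add: meas_add_nat)
qed simp_all

lemma xi'_GM: "lvl \<iota> \<in> L \<Longrightarrow> xi' \<iota> \<in> measurable (GM L) (count_space UNIV)"
  by (cases \<iota>) (simp add: xi'_def lvl_def xi_GM)

lemma partition_bound:
  fixes E B :: "'v \<Rightarrow> 'w set"
  assumes cS: "countable S" and EM: "\<And>v. v \<in> S \<Longrightarrow> E v \<in> sets M" and BM: "\<And>v. v \<in> S \<Longrightarrow> B v \<in> sets M"
    and disj: "disjoint_family_on E S"
    and ind: "\<And>v. v \<in> S \<Longrightarrow> prob (E v \<inter> B v) = prob (E v) * prob (B v)"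
    and bnd: "\<And>v. v \<in> S \<Longrightarrow> prob (B v) \<le> \<beta>" and b0: "0 \<le> \<beta>"
  shows "prob (\<Union>v\<in>S. E v \<inter> B v) \<le> \<beta>"
proof -
  have dj: "disjoint_family_on (\<lambda>v. E v \<inter> B v) S"
    using disj unfolding disjoint_family_on_def by blast
  have "emeasure M (\<Union>v\<in>S. E v \<inter> B v) = (\<integral>\<^sup>+v. emeasure M (E v \<inter> B v) \<partial>count_space S)"
    by (rule emeasure_UN_countable) (use cS EM BM dj in auto)
  also have "\<dots> \<le> (\<integral>\<^sup>+v. ennreal \<beta> * emeasure M (E v) \<partial>count_space S)"
  proof (rule nn_integral_mono)
    fix v assume "v \<in> space (count_space S)"
    then have v: "v \<in> S" by simp
    have "prob (E v \<inter> B v) \<le> \<beta> * prob (E v)"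
      using ind[OF v] bnd[OF v] by (simp add: mult_right_mono mult.commute)
    then show "emeasure M (E v \<inter> B v) \<le> ennreal \<beta> * emeasure M (E v)"
      by (simp add: emeasure_eq_measure ennreal_mult[symmetric] b0)
  qed
  also have "\<dots> = ennreal \<beta> * (\<integral>\<^sup>+v. emeasure M (E v) \<partial>count_space S)"
    by (rule nn_integral_cmult) simp
  also have "(\<integral>\<^sup>+v. emeasure M (E v) \<partial>count_space S) = emeasure M (\<Union>v\<in>S. E v)"
    by (rule emeasure_UN_countable[symmetric]) (use cS EM disj in auto)
  also have "\<dots> \<le> 1"
    using EM by (simp add: emeasure_eq_measure)
  finally have "emeasure M (\<Union>v\<in>S. E v \<inter> B v) \<le> ennreal \<beta>"
    by (metis mult.right_neutral mult_left_mono zero_le order_trans)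
  then show ?thesis
    using b0 by (simp add: emeasure_eq_measure)
qed

lemma step_bound:
  fixes r N0 \<beta> :: real
  assumes S: "finite S" and N0: "0 < N0" and b0: "0 \<le> \<beta>"
    and hb: "\<And>I. finite I \<Longrightarrow> I \<noteq> {} \<Longrightarrow> N0 \<le> real (card I) \<Longrightarrow>
               prob {\<omega>\<in>space M. real (\<Sum>\<iota>\<in>I. xi' \<iota> \<omega>) < r * card I} \<le> \<beta>"
  shows "prob {\<omega>\<in>space M. N0 \<le> real (\<Sum>i\<in>S. X i k m \<omega>) \<and>
            real (\<Sum>i\<in>S. X i k (Suc m) \<omega>) < r * real (\<Sum>i\<in>S. X i k m \<omega>)} \<le> \<beta>"
proof -
  define PS where "PS = {v \<in> PiE S (\<lambda>_. UNIV :: nat set). N0 \<le> real (\<Sum>i\<in>S. v i)}"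
  define h where "h = (\<lambda>(i::nat, j::nat). (i, k, m, j))"
  define Iv where "Iv v = h ` (SIGMA i:S. {..<v i})" for v :: "nat \<Rightarrow> nat"
  define Ev where "Ev v = {\<omega>\<in>space M. \<forall>i\<in>S. X i k m \<omega> = v i}" for v :: "nat \<Rightarrow> nat"
  define Bv where "Bv v = {\<omega>\<in>space M. real (\<Sum>\<iota>\<in>Iv v. xi' \<iota> \<omega>) < r * card (Iv v)}" for v
  have inj: "inj_on h A" for A unfolding h_def inj_on_def by auto
  have finSig: "finite (SIGMA i:S. {..<v i})" for v :: "nat \<Rightarrow> nat" using S by (intro finite_SigmaI) auto
  have cardI: "card (Iv v) = (\<Sum>i\<in>S. v i)" for v :: "nat \<Rightarrow> nat"
    unfolding Iv_def card_image[OF inj] by (subst card_SigmaI[OF S]) auto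
  have finI: "finite (Iv v)" for v :: "nat \<Rightarrow> nat" unfolding Iv_def using finSig by simp
  have sumeq: "(\<Sum>\<iota>\<in>Iv v. xi' \<iota> \<omega>) = (\<Sum>i\<in>S. \<Sum>j<v i. \<xi> i k m j \<omega>)" for v \<omega>
  proof -
    have "(\<Sum>\<iota>\<in>Iv v. xi' \<iota> \<omega>) = (\<Sum>x\<in>(SIGMA i:S. {..<v i}). xi' (h x) \<omega>)"
      unfolding Iv_def by (subst sum.reindex[OF inj]) simp
    also have "\<dots> = (\<Sum>(i,j)\<in>(SIGMA i:S. {..<v i}). \<xi> i k m j \<omega>)"
      by (rule sum.cong) (auto simp: h_def xi'_def)
    also have "\<dots> = (\<Sum>i\<in>S. \<Sum>j<v i. \<xi> i k m j \<omega>)"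
      by (rule sum.Sigma[symmetric]) (use S in auto)
    finally show ?thesis .
  qed
  have seteq: "{\<omega>\<in>space M. N0 \<le> real (\<Sum>i\<in>S. X i k m \<omega>) \<and>
            real (\<Sum>i\<in>S. X i k (Suc m) \<omega>) < r * real (\<Sum>i\<in>S. X i k m \<omega>)} = (\<Union>v\<in>PS. Ev v \<inter> Bv v)"
  proof (intro equalityI subsetI)
    fix \<omega> assume \<omega>: "\<omega> \<in> {\<omega>\<in>space M. N0 \<le> real (\<Sum>i\<in>S. X i k m \<omega>) \<and>
            real (\<Sum>i\<in>S. X i k (Suc m) \<omega>) < r * real (\<Sum>i\<in>S. X i k m \<omega>)}"
    define v where "v = restrict (\<lambda>i. X i k m \<omega>) S"
    have sv: "(\<Sum>i\<in>S. v i) = (\<Sum>i\<in>S. X i k m \<omega>)" unfolding v_def by simp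
    have "v \<in> PS" using \<omega> sv unfolding PS_def v_def by auto
    moreover have "\<omega> \<in> Ev v" using \<omega> unfolding Ev_def v_def by auto
    moreover have "\<omega> \<in> Bv v"
    proof -
      have "(\<Sum>\<iota>\<in>Iv v. xi' \<iota> \<omega>) = (\<Sum>i\<in>S. X i k (Suc m) \<omega>)"
        unfolding sumeq XSuc by (intro sum.cong) (auto simp: v_def)
      then have A: "real (\<Sum>\<iota>\<in>Iv v. xi' \<iota> \<omega>) = real (\<Sum>i\<in>S. X i k (Suc m) \<omega>)" by (simp only:)
      have B: "real (card (Iv v)) = real (\<Sum>i\<in>S. X i k m \<omega>)" using cardI sv by (simp only:)
      show ?thesis using \<omega> A B by (simp add: Bv_def)
    qed
    ultimately show "\<omega> \<in> (\<Union>v\<in>PS. Ev v \<inter> Bv v)" by blast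
  next
    fix \<omega> assume "\<omega> \<in> (\<Union>v\<in>PS. Ev v \<inter> Bv v)"
    then obtain v where v: "v \<in> PS" "\<omega> \<in> Ev v" "\<omega> \<in> Bv v" by blast
    have sv: "(\<Sum>i\<in>S. v i) = (\<Sum>i\<in>S. X i k m \<omega>)" using v(2) unfolding Ev_def by auto
    have "(\<Sum>\<iota>\<in>Iv v. xi' \<iota> \<omega>) = (\<Sum>i\<in>S. X i k (Suc m) \<omega>)"
      unfolding sumeq XSuc using v(2) unfolding Ev_def by (intro sum.cong) auto
    then have A: "real (\<Sum>\<iota>\<in>Iv v. xi' \<iota> \<omega>) = real (\<Sum>i\<in>S. X i k (Suc m) \<omega>)" by (simp only:)
    have B: "real (card (Iv v)) = real (\<Sum>i\<in>S. X i k m \<omega>)" using cardI sv by (simp only:)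
    have C: "real (sum v S) = real (\<Sum>i\<in>S. X i k m \<omega>)" using sv by (simp only:)
    have "\<omega> \<in> space M" using v(2) by (simp add: Ev_def)
    moreover have "N0 \<le> real (sum v S)" using v(1) by (simp add: PS_def)
    moreover have "real (\<Sum>\<iota>\<in>Iv v. xi' \<iota> \<omega>) < r * real (card (Iv v))" using v(3) by (simp add: Bv_def)
    ultimately show "\<omega> \<in> {\<omega>\<in>space M. N0 \<le> real (\<Sum>i\<in>S. X i k m \<omega>) \<and>
            real (\<Sum>i\<in>S. X i k (Suc m) \<omega>) < r * real (\<Sum>i\<in>S. X i k m \<omega>)}"
      using A B C by (simp only: mem_Collect_eq)
  qed
  have EG: "Ev v \<in> Gen {..<m}" for v
  proof -
    have [measurable]: "X i k m \<in> measurable (GM {..<m}) (count_space UNIV)" for i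
      by (rule X_GM) auto
    have "{\<omega>\<in>space (GM {..<m}). \<forall>i\<in>S. X i k m \<omega> = v i} \<in> sets (GM {..<m})"
      using S by measurable
    then show ?thesis by (simp add: Ev_def space_GM sets_GM)
  qed
  have BG: "Bv v \<in> Gen {m}" for v
  proof -
    have "(\<lambda>\<omega>. \<Sum>\<iota>\<in>Iv v. xi' \<iota> \<omega>) \<in> measurable (GM {m}) (count_space UNIV)"
      by (rule meas_sum_nat', rule xi'_GM) (auto simp: Iv_def h_def lvl_def)
    from measurable_sets[OF this, of "{n. real n < r * card (Iv v)}"]
    show ?thesis by (simp add: Bv_def space_GM sets_GM vimage_def Int_def conj_commute)
  qed
  have "prob (\<Union>v\<in>PS. Ev v \<inter> Bv v) \<le> \<beta>"
  proof (rule partition_bound)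
    show "countable PS" unfolding PS_def
      by (rule countable_subset[OF _ countable_PiE[OF S]]) auto
    show "Ev v \<in> events" for v using EG Gen_sub by auto
    show "Bv v \<in> events" for v using BG Gen_sub by auto
    show "disjoint_family_on Ev PS"
      unfolding disjoint_family_on_def
    proof (intro ballI impI)
      fix v w assume vw: "v \<in> PS" "w \<in> PS" "v \<noteq> w"
      then obtain i where "i \<in> S" "v i \<noteq> w i" unfolding PS_def
        by (metis (no_types, lifting) PiE_ext mem_Collect_eq)
      then show "Ev v \<inter> Ev w = {}" unfolding Ev_def by auto
    qed
    show "prob (Ev v \<inter> Bv v) = prob (Ev v) * prob (Bv v)" for v
      by (rule indep_levels[OF _ EG BG]) auto
    show "prob (Bv v) \<le> \<beta>" if "v \<in> PS" for v
    proof -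
      have "N0 \<le> real (card (Iv v))" using that unfolding PS_def cardI by simp
      moreover have "Iv v \<noteq> {}" using N0 calculation by (auto simp: card_gt_0_iff)
      ultimately show ?thesis unfolding Bv_def using hb[OF finI] by simp
    qed
    show "0 \<le> \<beta>" by (rule b0)
  qed
  then show ?thesis unfolding seteq .
qed

lemma muK_lim:
  assumes "r < \<mu>"
  shows "\<exists>K>0. r < muK K"
proof -
  have m1: "(\<lambda>x::nat. real x) \<in> borel_measurable (measure_pmf p)" by simp
  have m2: "(\<lambda>x::nat. real (min x K)) \<in> borel_measurable (measure_pmf p)" for K by simp
  have lim: "AE x in measure_pmf p. (\<lambda>K. real (min x K)) \<longlonglongrightarrow> real x"
  proof (rule AE_I2)
    fix x :: nat
    have "eventually (\<lambda>K. real (min x K) = real x) sequentially"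
      using eventually_ge_at_top[of x] by (rule eventually_mono) simp
    then show "(\<lambda>K. real (min x K)) \<longlonglongrightarrow> real x" by (rule tendsto_eventually)
  qed
  have bnd: "AE x in measure_pmf p. norm (real (min x K)) \<le> real x" for K
    by (rule AE_I2) simp
  have "(\<lambda>K. muK K) \<longlonglongrightarrow> measure_pmf.expectation p real"
    unfolding muK_def by (rule integral_dominated_convergence[OF m1 m2 int_p lim bnd])
  then have "eventually (\<lambda>K. r < muK K) sequentially"
    using assms mu_def by (intro order_tendstoD) auto
  then have "eventually (\<lambda>K. r < muK K \<and> K > 0) sequentially"
    by (rule eventually_conj) (rule eventually_gt_at_top)
  then obtain K where "r < muK K \<and> K > 0" using eventually_happens'[OF trivial_limit_sequentially] by blast
  then show ?thesis by blast
qed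

lemma Z_meas[measurable]: "(\<lambda>\<omega>. real (\<Sum>i\<in>S. X i k m \<omega>)) \<in> borel_measurable M"
proof -
  have "(\<lambda>\<omega>. \<Sum>i\<in>S. X i k m \<omega>) \<in> measurable M (count_space UNIV)"
    by (rule meas_sum_nat') simp
  then show ?thesis by (rule measurable_compose) simp
qed

lemma bc:
  fixes B :: "nat \<Rightarrow> 'w set" and \<epsilon> T c :: real
  assumes B: "\<And>n. B n \<in> sets M" and eps: "\<epsilon> > 0" and T: "T \<ge> 0" and c: "c \<ge> 0"
    and pb: "\<And>n. prob (B n) \<le> c * ((real n * T + 1) * exp (- \<epsilon> * n))"
  shows "AE \<omega> in M. eventually (\<lambda>n. \<omega> \<notin> B n) sequentially"
proof -
  have "summable (\<lambda>n. prob (B n))"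
  proof (rule summable_comparison_test')
    show "summable (\<lambda>n. c * ((real n * T + 1) * exp (- \<epsilon> * n)))"
      by (rule summable_mult[OF summ[OF eps T]])
    show "norm (prob (B n)) \<le> c * ((real n * T + 1) * exp (- \<epsilon> * n))" for n
      using pb[of n] by simp
  qed
  from borel_cantelli_AE1[OF B _ this] have "AE x in M. \<forall>\<^sub>F n in sequentially. x \<in> space M - B n"
    by (simp add: emeasure_eq_measure)
  then show ?thesis by (rule eventually_mono) (auto elim: eventually_mono)
qed

lemma UB:
  fixes A k :: "nat \<Rightarrow> nat" and T \<epsilon> :: real
  assumes A_pos: "\<And>n. n \<ge> 1 \<Longrightarrow> A n \<ge> 1" and T: "T \<ge> 0" and eps: "\<epsilon> > 0"
  shows "AE \<omega> in M. eventually (\<lambda>n. n \<ge> 1 \<longrightarrow> (\<forall>m\<le>nat \<lfloor>n * T\<rfloor>.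
            real (\<Sum>i=1..A n. X i (k n) m \<omega>) < real (A n) * \<mu> ^ m * exp (\<epsilon> * n))) sequentially"
proof -
  define B where "B n = {\<omega>\<in>space M. 1 \<le> n \<and> (\<exists>m\<le>nat \<lfloor>n * T\<rfloor>.
            real (A n) * \<mu> ^ m * exp (\<epsilon> * n) \<le> real (\<Sum>i=1..A n. X i (k n) m \<omega>))}" for n
  have BM: "B n \<in> sets M" for n unfolding B_def by measurable
  have pb: "prob (B n) \<le> 1 * ((real n * T + 1) * exp (- \<epsilon> * n))" for n
  proof (cases "n \<ge> 1")
    case False
    then have "B n = {}" by (auto simp: B_def)
    then show ?thesis using T by simp
  next
    case True
    have An: "real (A n) \<ge> 1" using A_pos[OF True] by simp
    let ?C = "\<lambda>m. {\<omega>\<in>space M. real (A n) * \<mu> ^ m * exp (\<epsilon> * n) \<le> real (\<Sum>i=1..A n. X i (k n) m \<omega>)}"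
    have "B n = (\<Union>m\<in>{..nat \<lfloor>n * T\<rfloor>}. ?C m)" using True by (auto simp: B_def)
    moreover have "prob (\<Union>m\<in>{..nat \<lfloor>n * T\<rfloor>}. ?C m) \<le> (\<Sum>m\<in>{..nat \<lfloor>n * T\<rfloor>}. prob (?C m))"
    proof (rule finite_measure_subadditive_finite)
      show "?C ` {..nat \<lfloor>n * T\<rfloor>} \<subseteq> events" by auto
    qed simp
    ultimately have "prob (B n) \<le> (\<Sum>m\<in>{..nat \<lfloor>n * T\<rfloor>}. prob (?C m))" by simp
    also have "\<dots> \<le> (\<Sum>m\<in>{..nat \<lfloor>n * T\<rfloor>}. exp (- \<epsilon> * n))"
    proof (rule sum_mono)
      fix m
      have cpos: "real (A n) * \<mu> ^ m * exp (\<epsilon> * n) > 0" using An mu_pos by simp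
      have "prob (?C m) \<le> real (card {1..A n}) * \<mu> ^ m / (real (A n) * \<mu> ^ m * exp (\<epsilon> * n))"
        by (rule markov_Z[OF _ cpos]) simp
      also have "\<dots> = exp (- \<epsilon> * n)" using An mu_pos by (simp add: exp_minus field_simps)
      finally show "prob (?C m) \<le> exp (- \<epsilon> * n)" .
    qed
    also have "\<dots> = (real (nat \<lfloor>n * T\<rfloor>) + 1) * exp (- \<epsilon> * n)" by simp
    also have "\<dots> \<le> 1 * ((real n * T + 1) * exp (- \<epsilon> * n))"
    proof -
      have "real (nat \<lfloor>n * T\<rfloor>) \<le> n * T" using T by (intro of_nat_floor) simp
      then show ?thesis unfolding mult_1_left by (intro mult_right_mono) auto
    qed
    finally show ?thesis .
  qed
  have "AE \<omega> in M. eventually (\<lambda>n. \<omega> \<notin> B n) sequentially"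
    by (rule bc[OF BM eps T _ pb]) simp
  with AE_space show ?thesis
  proof eventually_elim
    case (elim \<omega>)
    from elim(2) show ?case by (rule eventually_mono) (use elim(1) in \<open>auto simp: B_def\<close>)
  qed
qed

lemma exp_neg_le_inv:
  fixes y :: real assumes "y > 0" shows "exp (- y) \<le> 1 / y"
proof -
  have "y \<le> exp y" using exp_ge_add_one_self[of y] by linarith
  then show ?thesis using assms by (simp add: exp_minus field_simps)
qed

lemma LB:
  fixes A k :: "nat \<Rightarrow> nat" and T \<epsilon> :: real
  assumes T: "T \<ge> 0" and eps: "\<epsilon> > 0"
  shows "AE \<omega> in M. eventually (\<lambda>n. \<forall>m<nat \<lfloor>n * T\<rfloor>.
            exp (\<epsilon> * n) \<le> real (\<Sum>i=1..A n. X i (k n) m \<omega>) \<longrightarrow>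
            \<mu> * exp (-\<epsilon>) * real (\<Sum>i=1..A n. X i (k n) m \<omega>) \<le> real (\<Sum>i=1..A n. X i (k n) (Suc m) \<omega>)) sequentially"
proof -
  define r where "r = \<mu> * exp (-\<epsilon>)"
  have "r < \<mu>" using mu_pos eps by (simp add: r_def)
  then obtain K where K: "K > 0" "r < muK K" using muK_lim by blast
  define \<gamma> where "\<gamma> = 2 * (muK K - r)\<^sup>2 / (real K)\<^sup>2"
  have gpos: "\<gamma> > 0" using K by (simp add: \<gamma>_def)
  define B where "B n = {\<omega>\<in>space M. \<exists>m<nat \<lfloor>n * T\<rfloor>.
            exp (\<epsilon> * n) \<le> real (\<Sum>i=1..A n. X i (k n) m \<omega>) \<and>
            real (\<Sum>i=1..A n. X i (k n) (Suc m) \<omega>) < r * real (\<Sum>i=1..A n. X i (k n) m \<omega>)}" for n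
  have BM: "B n \<in> sets M" for n unfolding B_def by measurable
  have pb: "prob (B n) \<le> (1 / \<gamma>) * ((real n * T + 1) * exp (- \<epsilon> * n))" for n
  proof -
    let ?C = "\<lambda>m. {\<omega>\<in>space M. exp (\<epsilon> * n) \<le> real (\<Sum>i=1..A n. X i (k n) m \<omega>) \<and>
            real (\<Sum>i=1..A n. X i (k n) (Suc m) \<omega>) < r * real (\<Sum>i=1..A n. X i (k n) m \<omega>)}"
    have "B n = (\<Union>m\<in>{..<nat \<lfloor>n * T\<rfloor>}. ?C m)" by (auto simp: B_def)
    moreover have "prob (\<Union>m\<in>{..<nat \<lfloor>n * T\<rfloor>}. ?C m) \<le> (\<Sum>m\<in>{..<nat \<lfloor>n * T\<rfloor>}. prob (?C m))"
    proof (rule finite_measure_subadditive_finite)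
      show "?C ` {..<nat \<lfloor>n * T\<rfloor>} \<subseteq> events" by auto
    qed simp
    ultimately have "prob (B n) \<le> (\<Sum>m\<in>{..<nat \<lfloor>n * T\<rfloor>}. prob (?C m))" by simp
    also have "\<dots> \<le> (\<Sum>m\<in>{..<nat \<lfloor>n * T\<rfloor>}. exp (- \<epsilon> * n) / \<gamma>)"
    proof (rule sum_mono)
      fix m
      show "prob (?C m) \<le> exp (- \<epsilon> * n) / \<gamma>"
      proof (rule step_bound)
        show "0 < exp (\<epsilon> * n)" by simp
        show "0 \<le> exp (- \<epsilon> * n) / \<gamma>" using gpos by simp
        fix I :: "(nat \<times> nat \<times> nat \<times> nat) set"
        assume I: "finite I" "I \<noteq> {}" "exp (\<epsilon> * n) \<le> real (card I)"
        have cpos: "real (card I) > 0" using I by (simp add: card_gt_0_iff)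
        have "prob {\<omega>\<in>space M. real (\<Sum>\<iota>\<in>I. xi' \<iota> \<omega>) < r * card I}
           \<le> exp (- 2 * (real (card I) * (muK K - r))\<^sup>2 / (real (card I) * (real K - 0)\<^sup>2))"
          by (rule hoeff[OF I(1,2) K(1)]) (use K in simp)
        also have "- 2 * (real (card I) * (muK K - r))\<^sup>2 / (real (card I) * (real K - 0)\<^sup>2) = - (\<gamma> * card I)"
          using cpos K by (simp add: \<gamma>_def power2_eq_square field_simps)
        also have "exp (- (\<gamma> * card I)) \<le> 1 / (\<gamma> * card I)"
          by (rule exp_neg_le_inv) (use gpos cpos in simp)
        also have "\<dots> \<le> 1 / (\<gamma> * exp (\<epsilon> * n))"
          using gpos I(3) cpos by (intro divide_left_mono mult_left_mono mult_pos_pos) auto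
        also have "\<dots> = exp (- \<epsilon> * n) / \<gamma>" by (simp add: exp_minus field_simps)
        finally show "prob {\<omega>\<in>space M. real (\<Sum>\<iota>\<in>I. xi' \<iota> \<omega>) < r * card I} \<le> exp (- \<epsilon> * n) / \<gamma>" .
      qed simp
    qed
    also have "\<dots> = real (nat \<lfloor>n * T\<rfloor>) * exp (- \<epsilon> * n) / \<gamma>" by simp
    also have "\<dots> \<le> (1 / \<gamma>) * ((real n * T + 1) * exp (- \<epsilon> * n))"
    proof -
      have "real (nat \<lfloor>n * T\<rfloor>) \<le> n * T" using T by (intro of_nat_floor) simp
      then have "real (nat \<lfloor>n * T\<rfloor>) * exp (- \<epsilon> * n) \<le> (real n * T + 1) * exp (- \<epsilon> * n)"
        by (intro mult_right_mono) auto
      then show ?thesis using gpos by (simp add: divide_right_mono)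
    qed
    finally show ?thesis .
  qed
  have "AE \<omega> in M. eventually (\<lambda>n. \<omega> \<notin> B n) sequentially"
    by (rule bc[OF BM eps T _ pb]) (use gpos in simp)
  with AE_space show ?thesis
  proof eventually_elim
    case (elim \<omega>)
    from elim(2) show ?case by (rule eventually_mono) (use elim(1) in \<open>auto simp: B_def r_def not_less\<close>)
  qed
qed

lemma main_gw:
  fixes A k :: "nat \<Rightarrow> nat" and a T :: real
  assumes A_pos: "\<And>n. n \<ge> 1 \<Longrightarrow> A n \<ge> 1"
    and A_lim: "(\<lambda>n. ln (real (A n)) / real n) \<longlonglongrightarrow> a"
    and a_pos: "0 < a" and T_pos: "0 < T"
  shows "AE \<omega> in M.
    (\<lambda>n. SUP t\<in>{0..T}.
        \<bar>logplus (real (\<Sum>i=1..A n. X i (k n) (nat \<lfloor>real n * t\<rfloor>) \<omega>)) / real n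
          - max (a + t * ln \<mu>) 0\<bar>) \<longlonglongrightarrow> 0"
proof -
  define f where "f n t \<omega> = \<bar>logplus (real (\<Sum>i=1..A n. X i (k n) (nat \<lfloor>real n * t\<rfloor>) \<omega>)) / real n
          - max (a + t * ln \<mu>) 0\<bar>" for n t \<omega>
  define e where "e q = a / (T + 3) / (real q + 1)" for q :: nat
  have epos: "e q > 0" for q using a_pos T_pos by (simp add: e_def)
  have eT: "(T + 3) * e q = a / (real q + 1)" for q using T_pos by (simp add: e_def)
  have ea: "(T + 3) * e q \<le> a" for q
    unfolding eT using a_pos by (simp add: divide_le_eq)
  have each: "AE \<omega> in M. eventually (\<lambda>n. \<forall>t\<in>{0..T}. f n t \<omega> \<le> (T + 3) * e q) sequentially" for q
  proof -
    let ?\<epsilon> = "e q"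
    have ev1: "eventually (\<lambda>n. \<bar>ln (real (A n)) / real n - a\<bar> \<le> ?\<epsilon>) sequentially"
    proof -
      have "eventually (\<lambda>n. dist (ln (real (A n)) / real n) a < ?\<epsilon>) sequentially"
        using A_lim epos by (rule tendstoD)
      then show ?thesis by (rule eventually_mono) (simp add: dist_real_def)
    qed
    have ev2: "eventually (\<lambda>n. \<bar>ln \<mu>\<bar> / real n \<le> ?\<epsilon>) sequentially"
    proof -
      have "(\<lambda>n. \<bar>ln \<mu>\<bar> / real n) \<longlonglongrightarrow> 0" by (rule lim_const_over_n)
      then have "eventually (\<lambda>n. dist (\<bar>ln \<mu>\<bar> / real n) 0 < ?\<epsilon>) sequentially"
        using epos by (rule tendstoD)
      then show ?thesis by (rule eventually_mono) (simp add: dist_real_def)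
    qed
    have ev3: "eventually (\<lambda>n. n \<ge> (1::nat)) sequentially" by (rule eventually_ge_at_top)
    have U: "AE \<omega> in M. eventually (\<lambda>n. n \<ge> 1 \<longrightarrow> (\<forall>m\<le>nat \<lfloor>n * T\<rfloor>.
            real (\<Sum>i=1..A n. X i (k n) m \<omega>) < real (A n) * \<mu> ^ m * exp (?\<epsilon> * n))) sequentially"
      by (rule UB[OF A_pos _ epos]) (use T_pos in auto)
    have L: "AE \<omega> in M. eventually (\<lambda>n. \<forall>m<nat \<lfloor>n * T\<rfloor>.
            exp (?\<epsilon> * n) \<le> real (\<Sum>i=1..A n. X i (k n) m \<omega>) \<longrightarrow>
            \<mu> * exp (-?\<epsilon>) * real (\<Sum>i=1..A n. X i (k n) m \<omega>) \<le> real (\<Sum>i=1..A n. X i (k n) (Suc m) \<omega>)) sequentially"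
      by (rule LB[OF _ epos]) (use T_pos in auto)
    from U L show ?thesis
    proof eventually_elim
      case (elim \<omega>)
      from elim(1) elim(2) ev1 ev2 ev3 show ?case
      proof eventually_elim
        case (elim n)
        show ?case
        proof
          fix t assume t: "t \<in> {0..T}"
          have Z0: "real (\<Sum>i=1..A n. X i (k n) 0 \<omega>) = real (A n)" by (simp add: X0)
          show "f n t \<omega> \<le> (T + 3) * e q"
            unfolding f_def
            by (rule det[where Z="\<lambda>m. \<Sum>i=1..A n. X i (k n) m \<omega>" and N="nat \<lfloor>n * T\<rfloor>", OF elim(5) epos mu_pos _ _ _ Z0 elim(3) elim(4) ea refl])
               (use t elim A_pos[OF elim(5)] in auto)
        qed
      qed
    qed
  qed
  then have "AE \<omega> in M. \<forall>q. eventually (\<lambda>n. \<forall>t\<in>{0..T}. f n t \<omega> \<le> (T + 3) * e q) sequentially"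
    by (simp add: AE_all_countable)
  then have "AE \<omega> in M. (\<lambda>n. SUP t\<in>{0..T}. f n t \<omega>) \<longlonglongrightarrow> 0"
  proof (rule eventually_mono)
    fix \<omega> assume H: "\<forall>q. eventually (\<lambda>n. \<forall>t\<in>{0..T}. f n t \<omega> \<le> (T + 3) * e q) sequentially"
    show "(\<lambda>n. SUP t\<in>{0..T}. f n t \<omega>) \<longlonglongrightarrow> 0"
    proof (rule LIMSEQ_I)
      fix r :: real assume r: "0 < r"
      obtain q :: nat where q: "a / r < real q" using reals_Archimedean2 by blast
      have qr: "(T + 3) * e q < r"
      proof -
        have "a < r * (real q + 1)" using q r by (simp add: field_simps)
        then show ?thesis unfolding eT using r by (simp add: divide_less_eq mult.commute)
      qed
      from H[rule_format, of q] obtain no where no: "\<And>n. n \<ge> no \<Longrightarrow> \<forall>t\<in>{0..T}. f n t \<omega> \<le> (T + 3) * e q"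
        unfolding eventually_sequentially by blast
      show "\<exists>no. \<forall>n\<ge>no. norm ((SUP t\<in>{0..T}. f n t \<omega>) - 0) < r"
      proof (intro exI allI impI)
        fix n assume "n \<ge> no"
        then have bnd: "\<forall>t\<in>{0..T}. f n t \<omega> \<le> (T + 3) * e q" by (rule no)
        have ne: "{0..T} \<noteq> {}" using T_pos by simp
        have up: "(SUP t\<in>{0..T}. f n t \<omega>) \<le> (T + 3) * e q"
          by (rule cSUP_least[OF ne]) (use bnd in auto)
        have bdd: "bdd_above ((\<lambda>t. f n t \<omega>) ` {0..T})"
          by (rule bdd_aboveI2[where M="(T + 3) * e q"]) (use bnd in auto)
        have lo: "0 \<le> (SUP t\<in>{0..T}. f n t \<omega>)"
          by (rule cSUP_upper2[OF bdd, of 0]) (use T_pos in \<open>auto simp: f_def\<close>)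
        show "norm ((SUP t\<in>{0..T}. f n t \<omega>) - 0) < r" using up lo qr by simp
      qed
    qed
  qed
  then show ?thesis by (simp only: f_def)
qed

end

theorem lemma3:
  fixes M :: "'w measure"
    and p :: "nat pmf"
    and \<mu> :: real
    and \<xi> :: "nat \<Rightarrow> nat \<Rightarrow> nat \<Rightarrow> nat \<Rightarrow> 'w \<Rightarrow> nat"
    and X :: "nat \<Rightarrow> nat \<Rightarrow> nat \<Rightarrow> 'w \<Rightarrow> nat"
    and A :: "nat \<Rightarrow> nat"
    and a T :: real
    and k :: "nat \<Rightarrow> nat"
  assumes M: "prob_space M"
    and offspring_mean: "integrable (measure_pmf p) real"
      "measure_pmf.expectation p real = \<mu>" "0 < \<mu>"
    and indep: "prob_space.indep_vars M (\<lambda>_. count_space UNIV)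
                  (\<lambda>(i, k, n, j). \<xi> i k n j) UNIV"
    and distr: "\<And>i k n j. distr M (count_space UNIV) (\<xi> i k n j) = measure_pmf p"
    and X0: "\<And>i k \<omega>. X i k 0 \<omega> = 1"
    and XSuc: "\<And>i k n \<omega>. X i k (Suc n) \<omega> = (\<Sum>j<X i k n \<omega>. \<xi> i k n j \<omega>)"
    and A_pos: "\<And>n. n \<ge> 1 \<Longrightarrow> A n \<ge> 1"
    and A_lim: "(\<lambda>n. ln (real (A n)) / real n) \<longlonglongrightarrow> a"
    and a_pos: "0 < a"
    and T_pos: "0 < T"
  shows "AE \<omega> in M.
    (\<lambda>n. SUP t\<in>{0..T}.
        \<bar>logplus (real (\<Sum>i=1..A n. X i (k n) (nat \<lfloor>real n * t\<rfloor>) \<omega>)) / real n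
          - max (a + t * ln \<mu>) 0\<bar>) \<longlonglongrightarrow> 0"
proof -
  interpret gw M p \<mu> \<xi> X
    by (rule gw.intro[OF M], unfold_locales) (use offspring_mean indep distr X0 XSuc in auto)
  show ?thesis by (rule main_gw[OF A_pos A_lim a_pos T_pos])
qed

end
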